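(* Let $H = \{h_0 = 0_H, h_1, \dots, h_{t-1}\}$ be a finite abelian group with a fixed enumeration of its elements, and let $\boldsymbol{\lambda} = (\lambda_0,\dots,\lambda_{t-1})$ be a sequence of nonnegative integers. Suppose that for infinitely many primes $p$, every non-zero sum subset of type $\boldsymbol{\lambda}$ of $(\mathbb{Z}_p \times H) \setminus \{0_{\mathbb{Z}_p\times H}\}$ is sequenceable. Then for every torsion-free abelian group $G$, every non-zero sum subset of type $\boldsymbol{\lambda}$ of $(G \times H) \setminus \{0_{G\times H}\}$ is sequenceable.
   Context: For a finite subset $S$ of an abelian group with $|S| = k$, an ordering $(x_1,\dots,x_k)$ of $S$ has partial sums $(y_0,\dots,y_k)$ with $y_0 = 0$, $y_i = x_1+\cdots+x_i$. It is a sequencing if the $y_i$ are pairwise distinct, and a rotational sequencing if they are pairwise distinct except that $y_k = y_0 = 0$; $S$ is sequenceable if it has one or the other. $S$ is non-zero sum if the sum of its elements is nonzero. For an abelian group $G$ and a finite abelian group $H = \{h_0=0_H,\dots,h_{t-1}\}$, the type of a finite subset $S \subseteq G \times H$ is $(\lambda_0,\dots,\lambda_{t-1})$ where $\lambda_i$ is the number of elements of $S$ whose $H$-coordinate equals $h_i$. *)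

theory Defs
  imports Main "HOL-Library.Product_Plus" "HOL-Computational_Algebra.Primes"
begin

definition psum :: "('a \<Rightarrow> 'a \<Rightarrow> 'a) \<Rightarrow> 'a \<Rightarrow> 'a list \<Rightarrow> nat \<Rightarrow> 'a" where
  "psum add z xs i = foldl add z (take i xs)"

definition is_sequencing :: "('a \<Rightarrow> 'a \<Rightarrow> 'a) \<Rightarrow> 'a \<Rightarrow> 'a list \<Rightarrow> bool" where
  "is_sequencing add z xs \<longleftrightarrow> inj_on (psum add z xs) {0..length xs}"

definition is_rot_sequencing :: "('a \<Rightarrow> 'a \<Rightarrow> 'a) \<Rightarrow> 'a \<Rightarrow> 'a list \<Rightarrow> bool" where
  "is_rot_sequencing add z xs \<longleftrightarrow>
     inj_on (psum add z xs) {0..<length xs} \<and> psum add z xs (length xs) = z"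

definition sequenceable_wrt :: "('a \<Rightarrow> 'a \<Rightarrow> 'a) \<Rightarrow> 'a \<Rightarrow> 'a set \<Rightarrow> bool" where
  "sequenceable_wrt add z S \<longleftrightarrow>
     (\<exists>xs. distinct xs \<and> set xs = S \<and> (is_sequencing add z xs \<or> is_rot_sequencing add z xs))"

definition has_type :: "nat \<Rightarrow> (nat \<Rightarrow> 'h) \<Rightarrow> (nat \<Rightarrow> nat) \<Rightarrow> ('g \<times> 'h) set \<Rightarrow> bool" where
  "has_type t e lam S \<longleftrightarrow> (\<forall>i<t. card {x \<in> S. snd x = e i} = lam i)"

text \<open>Addition in \<open>\<int>_p \<times> H\<close>, with \<open>\<int>_p\<close> represented by \<open>{0..<p}\<close> inside \<open>int\<close>.\<close>

definition addZpH :: "nat \<Rightarrow> int \<times> 'h::ab_group_add \<Rightarrow> int \<times> 'h \<Rightarrow> int \<times> 'h" where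
  "addZpH p a b = ((fst a + fst b) mod int p, snd a + snd b)"

definition sumZpH :: "nat \<Rightarrow> (int \<times> 'h::ab_group_add) set \<Rightarrow> int \<times> 'h" where
  "sumZpH p S = ((\<Sum>x\<in>S. fst x) mod int p, \<Sum>x\<in>S. snd x)"

definition torsion_free :: "'g::ab_group_add itself \<Rightarrow> bool" where
  "torsion_free _ \<longleftrightarrow> (\<forall>(x::'g) (n::nat). 0 < n \<longrightarrow> (\<Sum>i<n. x) = 0 \<longrightarrow> x = 0)"

end

theory Submission imports Defs "HOL-Library.Infinite_Set" begin

fun npow :: "nat \<Rightarrow> 'g::ab_group_add \<Rightarrow> 'g" where
  "npow 0 x = 0" | "npow (Suc n) x = x + npow n x"

lemma npow_add: "npow (m+n) x = npow m x + npow n x"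
  by (induction m) (auto simp: add.assoc)
lemma npow_distrib: "npow n (x+y) = npow n x + npow n y"
  by (induction n) (auto simp: algebra_simps)
lemma npow_minus: "npow n (-x) = - npow n x"
  by (induction n) auto
lemma npow_diff: "npow n (x-y) = npow n x - npow n y"
  using npow_distrib[of n x "-y"] npow_minus[of n y] by simp
lemma npow_mult: "npow (m*n) x = npow m (npow n x)"
  by (induction m) (auto simp: npow_add npow_distrib)
lemma npow_sum: "npow n x = (\<Sum>i<n. x)"
  by (induction n) (auto simp: add.commute)
lemma npow_zero[simp]: "npow n 0 = 0"
  by (induction n) auto

definition zmul :: "int \<Rightarrow> 'g::ab_group_add \<Rightarrow> 'g" where
  "zmul n x = (if 0 \<le> n then npow (nat n) x else - npow (nat (-n)) x)"

lemma zmul_nat: "zmul (int a - int b) x = npow a x - npow b x"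
proof (cases "b \<le> a")
  case True
  then have e: "int a - int b = int (a-b)" by simp
  have "npow a x = npow (a-b) x + npow b x" using npow_add[of "a-b" b x] True by simp
  then have "npow (a-b) x = npow a x - npow b x" by (simp add: algebra_simps)
  then show ?thesis unfolding e zmul_def by simp
next
  case False
  then have e1: "nat (-(int a - int b)) = b - a" and e2: "\<not> 0 \<le> int a - int b" by simp_all
  have "npow b x = npow (b-a) x + npow a x" using npow_add[of "b-a" a x] False by simp
  then have "- npow (b-a) x = npow a x - npow b x" by (simp add: algebra_simps)
  then show ?thesis unfolding zmul_def using e1 e2 by simp
qed

lemma zmul_add_left: "zmul (m+n) x = zmul m x + zmul n x"
proof -
  obtain a b where m: "m = int a - int b" by (rule int_diff_cases)
  obtain c d where n: "n = int c - int d" by (rule int_diff_cases)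
  have e: "int a - int b + (int c - int d) = int (a+c) - int (b+d)" by simp
  show ?thesis unfolding m n by (simp only: e zmul_nat npow_add) (simp add: algebra_simps)
qed

lemma zmul_mult: "zmul (m*n) x = zmul m (zmul n x)"
proof -
  obtain a b where m: "m = int a - int b" by (rule int_diff_cases)
  obtain c d where n: "n = int c - int d" by (rule int_diff_cases)
  have e: "(int a - int b) * (int c - int d) = int (a*c+b*d) - int (a*d+b*c)" by (simp add: algebra_simps)
  show ?thesis unfolding m n
    by (simp only: e zmul_nat npow_add npow_diff npow_mult) (simp add: algebra_simps)
qed

lemma zmul_distrib: "zmul n (x+y) = zmul n x + zmul n y"
  by (simp add: zmul_def npow_distrib)
lemma zmul_0[simp]: "zmul 0 x = 0" by (simp add: zmul_def)
lemma zmul_1[simp]: "zmul 1 x = x" by (simp add: zmul_def)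
lemma zmul_zero[simp]: "zmul n 0 = 0" by (simp add: zmul_def)
lemma zmul_uminus: "zmul (-n) x = - zmul n x"
  using zmul_add_left[of "-n" n x] by (simp add: eq_neg_iff_add_eq_0)
lemma zmul_diff_left: "zmul (m - n) x = zmul m x - zmul n x"
  using zmul_add_left[of m "-n" x] zmul_uminus[of n x] by simp
lemma zmul_sum: "finite I \<Longrightarrow> zmul n (sum f I) = (\<Sum>i\<in>I. zmul n (f i))"
  by (induction I rule: finite_induct) (auto simp: zmul_distrib)

lemma zmul_tf:
  assumes tf: "torsion_free TYPE('g::ab_group_add)" and n: "n \<noteq> 0" and z: "zmul n (x::'g) = 0"
  shows "x = 0"
proof (cases "0 \<le> n")
  case True
  then have "(\<Sum>i<nat n. x) = 0" "0 < nat n" using z n by (auto simp: zmul_def npow_sum)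
  then show ?thesis using tf unfolding torsion_free_def by blast
next
  case False
  then have "(\<Sum>i<nat (-n). x) = 0" "0 < nat (-n)" using z n by (auto simp: zmul_def npow_sum)
  then show ?thesis using tf unfolding torsion_free_def by blast
qed

lemma core:
  fixes a :: "'i \<Rightarrow> 'g::ab_group_add"
  assumes tf: "torsion_free TYPE('g)" and fI: "finite I"
  shows "finite C \<Longrightarrow> \<exists>b. \<forall>c\<in>C. ((\<Sum>i\<in>I. zmul (c i) (a i)) = 0) = ((\<Sum>i\<in>I. c i * b i) = (0::int))"
  using fI
proof (induction I arbitrary: C rule: finite_induct)
  case empty
  then show ?case by simp
next
  case (insert j I)
  show ?case
  proof (cases "\<exists>n m. n \<noteq> 0 \<and> zmul n (a j) = (\<Sum>i\<in>I. zmul (m i) (a i))")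
    case True
    then obtain n m where n0: "n \<noteq> 0" and hm: "zmul n (a j) = (\<Sum>i\<in>I. zmul (m i) (a i))"
      by blast
    define C' where "C' = (\<lambda>c i. n * c i + c j * m i) ` C"
    have "finite C'" using insert.prems by (simp add: C'_def)
    from insert.IH[OF this] obtain b' where
      hb': "\<forall>c\<in>C'. ((\<Sum>i\<in>I. zmul (c i) (a i)) = 0) = ((\<Sum>i\<in>I. c i * b' i) = 0)" by blast
    define b where "b = (\<lambda>i. if i = j then (\<Sum>i\<in>I. m i * b' i) else n * b' i)"
    have "\<forall>c\<in>C. ((\<Sum>i\<in>insert j I. zmul (c i) (a i)) = 0) = ((\<Sum>i\<in>insert j I. c i * b i) = 0)"
    proof
      fix c assume c: "c \<in> C"
      let ?c' = "\<lambda>i. n * c i + c j * m i"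
      have c': "?c' \<in> C'" using c by (simp add: C'_def)
      have g: "zmul n (\<Sum>i\<in>insert j I. zmul (c i) (a i)) = (\<Sum>i\<in>I. zmul (?c' i) (a i))"
      proof -
        have "zmul n (\<Sum>i\<in>insert j I. zmul (c i) (a i))
            = zmul n (zmul (c j) (a j)) + (\<Sum>i\<in>I. zmul n (zmul (c i) (a i)))"
          using insert.hyps by (simp add: zmul_distrib zmul_sum)
        also have "zmul n (zmul (c j) (a j)) = zmul (c j) (zmul n (a j))"
          by (simp add: zmul_mult[symmetric] mult.commute)
        also have "\<dots> = (\<Sum>i\<in>I. zmul (c j * m i) (a i))"
          by (simp add: hm zmul_sum insert.hyps zmul_mult)
        also have "(\<Sum>i\<in>I. zmul n (zmul (c i) (a i))) = (\<Sum>i\<in>I. zmul (n * c i) (a i))"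
          by (simp add: zmul_mult)
        finally show ?thesis by (simp add: zmul_add_left sum.distrib add.commute)
      qed
      have z: "(\<Sum>i\<in>insert j I. c i * b i) = (\<Sum>i\<in>I. ?c' i * b' i)"
      proof -
        have sI: "(\<Sum>i\<in>I. c i * b i) = (\<Sum>i\<in>I. c i * (n * b' i))"
          by (rule sum.cong) (use insert.hyps in \<open>auto simp: b_def\<close>)
        have "(\<Sum>i\<in>insert j I. c i * b i) = c j * (\<Sum>i\<in>I. m i * b' i) + (\<Sum>i\<in>I. c i * (n * b' i))"
          using insert.hyps sI by (simp add: b_def)
        also have "\<dots> = (\<Sum>i\<in>I. ?c' i * b' i)"
          by (simp add: sum_distrib_left sum.distrib algebra_simps)
        finally show ?thesis .
      qed
      have "((\<Sum>i\<in>insert j I. zmul (c i) (a i)) = 0) = (zmul n (\<Sum>i\<in>insert j I. zmul (c i) (a i)) = 0)"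
        using zmul_tf[OF tf n0] by auto
      also have "\<dots> = ((\<Sum>i\<in>I. ?c' i * b' i) = 0)" using g hb' c' by simp
      finally show "((\<Sum>i\<in>insert j I. zmul (c i) (a i)) = 0) = ((\<Sum>i\<in>insert j I. c i * b i) = 0)"
        using z by simp
    qed
    then show ?thesis by blast
  next
    case False
    from insert.IH[OF insert.prems] obtain b' where
      hb': "\<forall>c\<in>C. ((\<Sum>i\<in>I. zmul (c i) (a i)) = 0) = ((\<Sum>i\<in>I. c i * b' i) = 0)" by blast
    define B where "B = 1 + (\<Sum>c\<in>C. \<bar>\<Sum>i\<in>I. c i * b' i\<bar>)"
    define b where "b = b'(j := B)"
    show ?thesis
    proof (intro exI ballI)
      fix c assume c: "c \<in> C"
      have sI: "(\<Sum>i\<in>I. c i * b i) = (\<Sum>i\<in>I. c i * b' i)"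
        by (rule sum.cong) (use insert.hyps in \<open>auto simp: b_def\<close>)
      show "((\<Sum>i\<in>insert j I. zmul (c i) (a i)) = 0) = ((\<Sum>i\<in>insert j I. c i * b i) = 0)"
      proof (cases "c j = 0")
        case True
        have "(\<Sum>i\<in>insert j I. zmul (c i) (a i)) = (\<Sum>i\<in>I. zmul (c i) (a i))"
          using insert.hyps True by simp
        moreover have "(\<Sum>i\<in>insert j I. c i * b i) = (\<Sum>i\<in>I. c i * b' i)"
          using insert.hyps True sI by simp
        ultimately show ?thesis using bspec[OF hb' c] by simp
      next
        case cj: False
        have g: "(\<Sum>i\<in>insert j I. zmul (c i) (a i)) \<noteq> 0"
        proof
          assume "(\<Sum>i\<in>insert j I. zmul (c i) (a i)) = 0"
          then have "zmul (c j) (a j) = - (\<Sum>i\<in>I. zmul (c i) (a i))"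
            using insert.hyps by (simp add: eq_neg_iff_add_eq_0)
          also have "\<dots> = (\<Sum>i\<in>I. zmul (- c i) (a i))" by (simp add: zmul_uminus sum_negf)
          finally have "zmul (c j) (a j) = (\<Sum>i\<in>I. zmul ((\<lambda>i. - c i) i) (a i))" .
          then have "\<exists>n m. n \<noteq> 0 \<and> zmul n (a j) = (\<Sum>i\<in>I. zmul (m i) (a i))"
            using cj by (intro exI[of _ "c j"] exI[of _ "\<lambda>i. - c i"]) simp
          then show False using False by blast
        qed
        have "\<bar>\<Sum>i\<in>I. c i * b' i\<bar> \<le> (\<Sum>c\<in>C. \<bar>\<Sum>i\<in>I. c i * b' i\<bar>)"
          by (rule member_le_sum[OF c]) (use insert.prems in auto)
        then have le: "\<bar>\<Sum>i\<in>I. c i * b' i\<bar> < B" by (simp add: B_def)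
        have B0: "0 < B" using le by linarith
        have "1 \<le> \<bar>c j\<bar>" using cj by linarith
        then have "1 * B \<le> \<bar>c j\<bar> * B" using B0 by (intro mult_right_mono) auto
        then have "B \<le> \<bar>c j * B\<bar>" using B0 by (simp add: abs_mult)
        then have "c j * B + (\<Sum>i\<in>I. c i * b' i) \<noteq> 0" using le by linarith
        moreover have "(\<Sum>i\<in>insert j I. c i * b i) = c j * B + (\<Sum>i\<in>I. c i * b' i)"
          using insert.hyps sI by (simp add: b_def)
        ultimately show ?thesis using g by simp
      qed
    qed
  qed
qed

lemma foldl_plus_gen: "foldl (+) (z::'a::ab_group_add) l = z + sum_list l"
  by (induction l arbitrary: z) (auto simp: add.assoc)

lemma foldl_addZpH:
  "fst z mod int p = fst z \<Longrightarrow> foldl (addZpH p) z (map (\<lambda>x. (f x mod int p, g x)) l)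
     = ((fst z + sum_list (map f l)) mod int p, snd z + sum_list (map g l))"
proof (induction l arbitrary: z)
  case Nil
  then show ?case by (simp add: prod_eq_iff)
next
  case (Cons y l)
  have "fst (addZpH p z (f y mod int p, g y)) mod int p = fst (addZpH p z (f y mod int p, g y))"
    by (simp add: addZpH_def)
  from Cons.IH[OF this] show ?case by (simp add: addZpH_def mod_simps add.assoc)
qed

theorem theorem4p4:
  fixes e :: "nat \<Rightarrow> 'h::{ab_group_add, finite}"
    and t :: nat
    and lam :: "nat \<Rightarrow> nat"
  assumes enum: "bij_betw e {..<t} (UNIV :: 'h set)"
    and e0: "e 0 = 0"
    and hyp: "infinite {p::nat. prime p \<and>
               (\<forall>S. S \<subseteq> ({0..<int p} \<times> (UNIV :: 'h set)) - {(0, 0)}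
                    \<longrightarrow> has_type t e lam S
                    \<longrightarrow> sumZpH p S \<noteq> (0, 0)
                    \<longrightarrow> sequenceable_wrt (addZpH p) (0, 0) S)}"
    and tf: "torsion_free TYPE('g::ab_group_add)"
  shows "\<forall>S :: ('g \<times> 'h) set. finite S \<longrightarrow> S \<subseteq> UNIV - {0}
           \<longrightarrow> has_type t e lam S
           \<longrightarrow> \<Sum>S \<noteq> 0
           \<longrightarrow> sequenceable_wrt (+) 0 S"
proof (intro allI impI)
  fix S :: "('g \<times> 'h) set"
  assume fin: "finite S" and sub: "S \<subseteq> UNIV - {0}" and ty: "has_type t e lam S"
    and nz: "\<Sum>S \<noteq> 0"
  define ind :: "('g \<times> 'h) set \<Rightarrow> ('g \<times> 'h) \<Rightarrow> int" where
    "ind U z = (if z \<in> U then 1 else 0)" for U z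
  define D where "D = (\<lambda>(U,V) z. ind U z - ind V z) ` (Pow S \<times> Pow S)"
  have "finite D" using fin by (simp add: D_def)
  from core[OF tf fin this, of fst] obtain b where
    hb: "\<forall>c\<in>D. ((\<Sum>z\<in>S. zmul (c z) (fst z)) = 0) = ((\<Sum>z\<in>S. c z * b z) = 0)" by blast
  have key: "(sum fst U = sum fst V) = (sum b U = sum b V)" if UV: "U \<subseteq> S" "V \<subseteq> S" for U V
  proof -
    have inD: "(\<lambda>z. ind U z - ind V z) \<in> D" using UV by (auto simp: D_def)
    have "(\<Sum>z\<in>S. zmul (ind U z - ind V z) (fst z))
        = (\<Sum>z\<in>S. (if z \<in> U then fst z else 0) - (if z \<in> V then fst z else 0))"
      by (rule sum.cong) (auto simp: ind_def zmul_diff_left)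
    also have "\<dots> = sum fst (S \<inter> U) - sum fst (S \<inter> V)"
      by (simp add: sum_subtractf sum.inter_restrict[OF fin])
    also have "S \<inter> U = U" using UV by auto
    also have "S \<inter> V = V" using UV by auto
    finally have e1: "(\<Sum>z\<in>S. zmul (ind U z - ind V z) (fst z)) = sum fst U - sum fst V" .
    have "(\<Sum>z\<in>S. (ind U z - ind V z) * b z)
        = (\<Sum>z\<in>S. (if z \<in> U then b z else 0) - (if z \<in> V then b z else 0))"
      by (rule sum.cong) (auto simp: ind_def algebra_simps)
    also have "\<dots> = sum b (S \<inter> U) - sum b (S \<inter> V)"
      by (simp add: sum_subtractf sum.inter_restrict[OF fin])
    also have "S \<inter> U = U" using UV by auto
    also have "S \<inter> V = V" using UV by auto
    finally have e2: "(\<Sum>z\<in>S. (ind U z - ind V z) * b z) = sum b U - sum b V" .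
    show ?thesis using bspec[OF hb inD] e1 e2 by simp
  qed
  define M where "M = (\<Sum>z\<in>S. \<bar>b z\<bar>)"
  have M0: "0 \<le> M" unfolding M_def by (rule sum_nonneg) simp
  have "\<exists>p. nat (2*M) < p \<and> prime p \<and>
               (\<forall>S. S \<subseteq> ({0..<int p} \<times> (UNIV :: 'h set)) - {(0, 0)}
                    \<longrightarrow> has_type t e lam S
                    \<longrightarrow> sumZpH p S \<noteq> (0, 0)
                    \<longrightarrow> sequenceable_wrt (addZpH p) (0, 0) S)"
    using hyp unfolding infinite_nat_iff_unbounded by blast
  then obtain p where pM: "nat (2*M) < p" and pr: "prime p" and
    hp: "\<forall>S. S \<subseteq> ({0..<int p} \<times> (UNIV :: 'h set)) - {(0, 0)}
                    \<longrightarrow> has_type t e lam S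
                    \<longrightarrow> sumZpH p S \<noteq> (0, 0)
                    \<longrightarrow> sequenceable_wrt (addZpH p) (0, 0) S" by blast
  have pM': "2*M < int p" using pM M0 by linarith
  have bnd: "\<bar>sum b U\<bar> \<le> M" if "U \<subseteq> S" for U
  proof -
    have "\<bar>sum b U\<bar> \<le> (\<Sum>z\<in>U. \<bar>b z\<bar>)" by (rule sum_abs)
    also have "\<dots> \<le> M" unfolding M_def by (rule sum_mono2[OF fin that]) auto
    finally show ?thesis .
  qed
  have modeq: "sum b U = sum b V" if "U \<subseteq> S" "V \<subseteq> S" "sum b U mod int p = sum b V mod int p" for U V
  proof (rule ccontr)
    assume ne: "sum b U \<noteq> sum b V"
    have "int p dvd (sum b U - sum b V)" using that(3) by (simp add: mod_eq_dvd_iff)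
    then have "\<bar>int p\<bar> \<le> \<bar>sum b U - sum b V\<bar>" using ne by (intro dvd_imp_le_int) auto
    moreover have "\<bar>sum b U - sum b V\<bar> \<le> 2*M" using bnd[OF that(1)] bnd[OF that(2)] by linarith
    ultimately show False using pM' by linarith
  qed
  define \<phi> where "\<phi> z = (b z mod int p, snd z)" for z
  have inj: "inj_on \<phi> S"
  proof
    fix x y assume xy: "x \<in> S" "y \<in> S" "\<phi> x = \<phi> y"
    then have "sum b {x} mod int p = sum b {y} mod int p" "snd x = snd y" by (auto simp: \<phi>_def)
    then have "sum b {x} = sum b {y}" using modeq[of "{x}" "{y}"] xy by auto
    then have "sum fst {x} = sum fst {y}" using key[of "{x}" "{y}"] xy by auto
    then show "x = y" using \<open>snd x = snd y\<close> by (simp add: prod_eq_iff)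
  qed
  define S' where "S' = \<phi> ` S"
  have p0: "0 < int p" using pr prime_gt_0_nat by auto
  have subS': "S' \<subseteq> ({0..<int p} \<times> (UNIV :: 'h set)) - {(0, 0)}"
  proof
    fix y assume "y \<in> S'"
    then obtain z where z: "z \<in> S" "y = \<phi> z" by (auto simp: S'_def)
    have "y \<noteq> (0,0)"
    proof
      assume y0: "y = (0,0)"
      then have "sum b {z} mod int p = sum b {} mod int p" "snd z = 0" using z by (auto simp: \<phi>_def)
      then have "sum b {z} = sum b {}" using modeq[of "{z}" "{}"] z by auto
      then have "sum fst {z} = sum fst {}" using key[of "{z}" "{}"] z by auto
      then have "z = 0" using \<open>snd z = 0\<close> by (simp add: prod_eq_iff)
      then show False using z sub by auto
    qed
    moreover have "fst y \<in> {0..<int p}" using z p0 by (auto simp: \<phi>_def)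
    ultimately show "y \<in> ({0..<int p} \<times> (UNIV :: 'h set)) - {(0, 0)}" by (cases y) auto
  qed
  have tyS': "has_type t e lam S'"
    unfolding has_type_def
  proof (intro allI impI)
    fix i assume "i < t"
    have "{x \<in> S'. snd x = e i} = \<phi> ` {x \<in> S. snd x = e i}" by (auto simp: S'_def \<phi>_def)
    moreover have "inj_on \<phi> {x \<in> S. snd x = e i}" using inj by (rule inj_on_subset) auto
    ultimately have "card {x \<in> S'. snd x = e i} = card {x \<in> S. snd x = e i}" by (simp add: card_image)
    then show "card {x \<in> S'. snd x = e i} = lam i" using ty \<open>i < t\<close> by (simp add: has_type_def)
  qed
  have nz': "(sum b S) mod int p \<noteq> 0 \<or> sum snd S \<noteq> 0"
  proof (rule ccontr)
    assume "\<not> ?thesis"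
    then have a1: "sum b S mod int p = sum b {} mod int p" and a2: "sum snd S = 0" by auto
    have "sum b S = sum b {}" using modeq[OF _ _ a1] by auto
    then have "sum fst S = 0" using key[of S "{}"] by auto
    then have "\<Sum>S = 0" using a2 by (simp add: prod_eq_iff fst_sum snd_sum)
    then show False using nz by simp
  qed
  have sumS': "sumZpH p S' = ((sum b S) mod int p, sum snd S)"
  proof -
    have r1: "sum fst S' = sum (fst \<circ> \<phi>) S" unfolding S'_def by (rule sum.reindex[OF inj])
    have r2: "sum snd S' = sum (snd \<circ> \<phi>) S" unfolding S'_def by (rule sum.reindex[OF inj])
    have f1: "fst \<circ> \<phi> = (\<lambda>z. b z mod int p)" by (auto simp: \<phi>_def)
    have f2: "snd \<circ> \<phi> = snd" by (auto simp: \<phi>_def)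
    have "sum fst S' = (\<Sum>z\<in>S. b z mod int p)" "sum snd S' = sum snd S"
      using r1 r2 f1 f2 by simp_all
    then show ?thesis by (simp add: sumZpH_def mod_sum_eq)
  qed
  have "sumZpH p S' \<noteq> (0,0)" using nz' sumS' by auto
  then have "sequenceable_wrt (addZpH p) (0, 0) S'" using hp subS' tyS' by blast
  then obtain xs' where d': "distinct xs'" and s': "set xs' = S'" and
    sq': "is_sequencing (addZpH p) (0,0) xs' \<or> is_rot_sequencing (addZpH p) (0,0) xs'"
    unfolding sequenceable_wrt_def by blast
  define xs where "xs = map (inv_into S \<phi>) xs'"
  have mxs: "map \<phi> xs = xs'"
    unfolding xs_def map_map using s' by (intro map_idI) (auto simp: S'_def f_inv_into_f)
  have dxs: "distinct xs" using d' mxs by (metis distinct_map)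
  have sxs: "set xs = S" unfolding xs_def using s' inj by (simp add: S'_def inv_into_image_cancel)
  have lxs: "length xs' = length xs" using mxs by auto
  have ps: "psum (+) 0 xs i = (sum fst (set (take i xs)), sum snd (set (take i xs)))" for i
  proof -
    have "psum (+) 0 xs i = sum_list (map id (take i xs))" by (simp add: psum_def foldl_plus_gen)
    also have "\<dots> = sum id (set (take i xs))" using dxs by (simp only: sum_list_distinct_conv_sum_set distinct_take)
    finally show ?thesis by (simp add: prod_eq_iff fst_sum snd_sum)
  qed
  have ps': "psum (addZpH p) (0,0) xs' i = (sum b (set (take i xs)) mod int p, sum snd (set (take i xs)))" for i
  proof -
    have "psum (addZpH p) (0,0) xs' i = foldl (addZpH p) (0,0) (map (\<lambda>x. (b x mod int p, snd x)) (take i xs))"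
      unfolding psum_def mxs[symmetric] take_map \<phi>_def by simp
    also have "\<dots> = (sum_list (map b (take i xs)) mod int p, sum_list (map snd (take i xs)))"
      by (simp add: foldl_addZpH)
    also have "\<dots> = (sum b (set (take i xs)) mod int p, sum snd (set (take i xs)))"
      using dxs by (simp add: sum_list_distinct_conv_sum_set)
    finally show ?thesis .
  qed
  have transfer: "psum (addZpH p) (0,0) xs' i = psum (addZpH p) (0,0) xs' j"
    if "psum (+) 0 xs i = psum (+) 0 xs j" for i j
  proof -
    have sub1: "set (take i xs) \<subseteq> S" "set (take j xs) \<subseteq> S" unfolding sxs[symmetric] by (simp_all add: set_take_subset)
    have "sum fst (set (take i xs)) = sum fst (set (take j xs))"
      "sum snd (set (take i xs)) = sum snd (set (take j xs))" using that ps by auto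
    then show ?thesis using key[OF sub1] ps' by simp
  qed
  have notrot: "psum (addZpH p) (0,0) xs' (length xs') \<noteq> (0,0)"
    using ps'[of "length xs'"] lxs sxs nz' by simp
  have "is_sequencing (addZpH p) (0,0) xs'" using sq' notrot unfolding is_rot_sequencing_def by blast
  then have "is_sequencing (+) 0 xs"
    unfolding is_sequencing_def inj_on_def lxs using transfer by blast
  then show "sequenceable_wrt (+) 0 S" unfolding sequenceable_wrt_def using dxs sxs by blast
qed

end
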